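(* Let $\Sigma$ be a topological Markov chain with shift $\sigma$ and $\mu$ a Gibbs measure on $\Sigma$ for a H\"older continuous potential (as in the context). Let $\{l_n\}$ be a sequence of natural numbers with $l_n\to\infty$. Then there exists a sequence of cylinders $\{C_n\}$, $C_n$ defined on an interval $\Lambda_n$, with $\sum_n\mu(C_n)=\infty$, such that the sequence $\{\Lambda_n\}$ is $\{l_n\}$-centered and $\{C_n\}$ does not satisfy condition (SP). Likewise, there exists such a sequence of cylinders with $\sum_n\mu(C_n)=\infty$ defined on an $\{l_n\}$-aligned sequence of intervals which does not satisfy (SP).
   Context: Let $M\ge2$ and $\mathbf A$ an $M\times M$ zero-one matrix with $\mathbf A^K$ entrywise positive for some $K\ge1$; $\Sigma=\{\underline\omega\in\{1,\dots,M\}^{\mathbb Z}:\mathbf A_{\omega_i\omega_{i+1}}=1\ \forall i\}$ with product topology and left shift $(\sigma\underline\omega)_i=\omega_{i+1}$; $\mu$ is the unique $\sigma$-invariant Gibbs measure of a H\"older continuous function on $\Sigma$ (H\"older w.r.t. $d_a(\underline\omega,\underline\omega')=a^n$, $n=\max\{n:\omega_i=\omega_i'\ \forall|i|<n\}$). A cylinder defined on $\Lambda=[n^-,n^+]\subset\mathbb Z$ is $\{\underline\omega'\in\Sigma:\omega_i'=\omega_i,\ n^-\le i\le n^+\}$ for fixed symbols $\omega_i$. A sequence of intervals $\{\Lambda_n\}$ is $\{l_n\}$-centered if the center $(n^-+n^+)/2$ of $\Lambda_n$ lies in $[-l_n/2,l_n/2]$ for all $n$, and $\{l_n\}$-aligned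 if the left endpoint of $\Lambda_n$ lies in $[0,l_n]$ for all $n$. For sets $A_n$ let $R_{mn}=\mu(\sigma^{-m}A_m\cap\sigma^{-n}A_n)-\mu(A_m)\mu(A_n)$; condition (SP) means: there is $C>0$ with $\sum_{m,n=M'}^NR_{mn}\le C\sum_{n=M'}^N\mu(A_n)$ for all $N\ge M'\ge1$. *)

theory Defs
  imports "HOL-Probability.Probability"
begin

text \<open>Symbols are the naturals 1..M; points of the full lshift are maps int => nat.\<close>

type_synonym seq = "int \<Rightarrow> nat"

fun mat_pow :: "nat \<Rightarrow> (nat \<Rightarrow> nat \<Rightarrow> nat) \<Rightarrow> nat \<Rightarrow> nat \<Rightarrow> nat \<Rightarrow> nat" where
  "mat_pow M A 0 i j = (if i = j then 1 else 0)"
| "mat_pow M A (Suc k) i j = (\<Sum>l\<in>{1..M}. mat_pow M A k i l * A l j)"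

definition zero_one_matrix :: "nat \<Rightarrow> (nat \<Rightarrow> nat \<Rightarrow> nat) \<Rightarrow> bool" where
  "zero_one_matrix M A \<longleftrightarrow> (\<forall>i\<in>{1..M}. \<forall>j\<in>{1..M}. A i j = 0 \<or> A i j = 1)"

definition primitive_matrix :: "nat \<Rightarrow> (nat \<Rightarrow> nat \<Rightarrow> nat) \<Rightarrow> bool" where
  "primitive_matrix M A \<longleftrightarrow> (\<exists>K\<ge>1. \<forall>i\<in>{1..M}. \<forall>j\<in>{1..M}. mat_pow M A K i j > 0)"

definition TMC :: "nat \<Rightarrow> (nat \<Rightarrow> nat \<Rightarrow> nat) \<Rightarrow> seq set" where
  "TMC M A = {\<omega>. (\<forall>i. \<omega> i \<in> {1..M}) \<and> (\<forall>i. A (\<omega> i) (\<omega> (i + 1)) = 1)}"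

definition lshift :: "seq \<Rightarrow> seq" where
  "lshift \<omega> = (\<lambda>i. \<omega> (i + 1))"

text \<open>Product sigma algebra (= Borel sigma algebra of the product topology) on {1..M}^Z.\<close>
definition full_shift_space :: "nat \<Rightarrow> seq measure" where
  "full_shift_space M = PiM UNIV (\<lambda>_::int. count_space {1..M})"

text \<open>Hoelder continuity w.r.t. d_a(w,w') = a^n, n = max{n : w_i = w'_i for |i| < n}
  (unfolded: agreement on |i| < n gives |phi w - phi w'| <= C a^n).\<close>
definition hoelder_on :: "seq set \<Rightarrow> (seq \<Rightarrow> real) \<Rightarrow> bool" where
  "hoelder_on S \<phi> \<longleftrightarrow> (\<exists>a C. 0 < a \<and> a < 1 \<and> 0 < C \<and>
     (\<forall>\<omega>\<in>S. \<forall>\<omega>'\<in>S. \<forall>n::nat. (\<forall>i. \<bar>i\<bar> < int n \<longrightarrow> \<omega> i = \<omega>' i) \<longrightarrow>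
        \<bar>\<phi> \<omega> - \<phi> \<omega>'\<bar> \<le> C * a ^ n))"

definition cylinder :: "seq set \<Rightarrow> int \<Rightarrow> int \<Rightarrow> seq \<Rightarrow> seq set" where
  "cylinder S lo hi w = {\<omega>'\<in>S. \<forall>i. lo \<le> i \<and> i \<le> hi \<longrightarrow> \<omega>' i = w i}"

definition gibbs_measure :: "nat \<Rightarrow> (nat \<Rightarrow> nat \<Rightarrow> nat) \<Rightarrow> (seq \<Rightarrow> real) \<Rightarrow> seq measure \<Rightarrow> bool" where
  "gibbs_measure M A \<phi> \<mu> \<longleftrightarrow>
     prob_space \<mu> \<and> sets \<mu> = sets (full_shift_space M) \<and>
     emeasure \<mu> (TMC M A) = 1 \<and>
     lshift \<in> measurable \<mu> \<mu> \<and> distr \<mu> \<mu> lshift = \<mu> \<and>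
     (\<exists>P c1 c2. 0 < c1 \<and> 0 < c2 \<and>
        (\<forall>\<omega>\<in>TMC M A. \<forall>n::nat. n \<ge> 1 \<longrightarrow>
           c1 * exp (- real n * P + (\<Sum>k<n. \<phi> ((lshift ^^ k) \<omega>)))
             \<le> measure \<mu> (cylinder (TMC M A) 0 (int n - 1) \<omega>) \<and>
           measure \<mu> (cylinder (TMC M A) 0 (int n - 1) \<omega>)
             \<le> c2 * exp (- real n * P + (\<Sum>k<n. \<phi> ((lshift ^^ k) \<omega>)))))"

definition Rcorr :: "seq measure \<Rightarrow> (nat \<Rightarrow> seq set) \<Rightarrow> nat \<Rightarrow> nat \<Rightarrow> real" where
  "Rcorr \<mu> C m n = measure \<mu> ((lshift ^^ m) -` C m \<inter> (lshift ^^ n) -` C n)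
                    - measure \<mu> (C m) * measure \<mu> (C n)"

definition SP :: "seq measure \<Rightarrow> (nat \<Rightarrow> seq set) \<Rightarrow> bool" where
  "SP \<mu> C \<longleftrightarrow> (\<exists>c>0. \<forall>M' N. 1 \<le> M' \<and> M' \<le> N \<longrightarrow>
      (\<Sum>m=M'..N. \<Sum>n=M'..N. Rcorr \<mu> C m n) \<le> c * (\<Sum>n=M'..N. measure \<mu> (C n)))"

definition centered_seq :: "(nat \<Rightarrow> nat) \<Rightarrow> (nat \<Rightarrow> int) \<Rightarrow> (nat \<Rightarrow> int) \<Rightarrow> bool" where
  "centered_seq l lo hi \<longleftrightarrow> (\<forall>n\<ge>1.
     - real (l n) / 2 \<le> real_of_int (lo n + hi n) / 2 \<and> real_of_int (lo n + hi n) / 2 \<le> real (l n) / 2)"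

definition aligned_seq :: "(nat \<Rightarrow> nat) \<Rightarrow> (nat \<Rightarrow> int) \<Rightarrow> bool" where
  "aligned_seq l lo \<longleftrightarrow> (\<forall>n\<ge>1. 0 \<le> lo n \<and> lo n \<le> int (l n))"

end

theory Submission
  imports Defs
begin

lemma space_fss: "space (full_shift_space M) = {\<omega>. \<forall>i. \<omega> i \<in> {1..M}}"
  by (auto simp: full_shift_space_def space_PiM PiE_iff)

lemma comp_meas[measurable]: "(\<lambda>x. x i) \<in> measurable (PiM UNIV (\<lambda>_::int. count_space {1..(M::nat)})) (count_space UNIV)"
proof -
  have "(\<lambda>x::nat. x) \<in> measurable (count_space {1..M}) (count_space (UNIV::nat set))" by simp
  from measurable_compose[OF measurable_component_singleton[of i UNIV "\<lambda>_::int. count_space {1..M}"] this]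
  show ?thesis by simp
qed

lemma TMC_sets: "TMC M A \<in> sets (full_shift_space M)"
proof -
  have "TMC M A = space (full_shift_space M) \<inter> (\<Inter>i. {\<omega> \<in> space (full_shift_space M). A (\<omega> i) (\<omega> (i+1)) = 1})"
    by (auto simp: TMC_def space_fss)
  also have "\<dots> \<in> sets (full_shift_space M)"
    unfolding full_shift_space_def
    by measurable
  finally show ?thesis .
qed

lemma TMC_space: "TMC M A \<subseteq> space (full_shift_space M)"
  by (auto simp: TMC_def space_fss)

lemma cyl_eq: "cylinder (TMC M A) k k w = TMC M A \<inter> {\<omega> \<in> space (full_shift_space M). \<omega> k = w k}"
  using TMC_space by (auto simp: cylinder_def)

lemma cyl_sets: "cylinder (TMC M A) k k w \<in> sets (full_shift_space M)"
proof -
  have "{\<omega> \<in> space (full_shift_space M). \<omega> k = w k} \<in> sets (full_shift_space M)"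
    unfolding full_shift_space_def by measurable
  then show ?thesis unfolding cyl_eq using TMC_sets by blast
qed

lemma funpow_lshift: "(lshift ^^ n) \<omega> = (\<lambda>i. \<omega> (i + int n))"
  by (induction n arbitrary: \<omega>) (auto simp: lshift_def add.commute add.left_commute)

lemma TMC_shift: "(\<lambda>i. \<omega> (i + (m::int))) \<in> TMC M A \<longleftrightarrow> \<omega> \<in> TMC M A"
proof
  assume "(\<lambda>i. \<omega> (i + m)) \<in> TMC M A"
  then have h1: "\<forall>i. \<omega> (i + m) \<in> {1..M}" and h2: "\<forall>i. A (\<omega> (i + m)) (\<omega> (i + 1 + m)) = 1"
    by (auto simp: TMC_def)
  have "\<omega> i \<in> {1..M}" for i using h1[rule_format, of "i - m"] by simp
  moreover have "A (\<omega> i) (\<omega> (i+1)) = 1" for i using h2[rule_format, of "i - m"] by (simp add: algebra_simps)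
  ultimately show "\<omega> \<in> TMC M A" by (auto simp: TMC_def)
next
  assume "\<omega> \<in> TMC M A"
  then have "\<forall>i. \<omega> i \<in> {1..M}" "\<forall>i. A (\<omega> i) (\<omega> (i + 1)) = 1" by (auto simp: TMC_def)
  moreover have "A (\<omega> (i + m)) (\<omega> (i + 1 + m)) = 1" for i
    using calculation(2)[rule_format, of "i + m"] by (simp add: add_ac)
  ultimately show "(\<lambda>i. \<omega> (i + m)) \<in> TMC M A" unfolding TMC_def by simp
qed

lemma pre_cyl: "(lshift ^^ n) -` cylinder (TMC M A) k k w = cylinder (TMC M A) (k + int n) (k + int n) (\<lambda>_. w k)"
  by (auto simp: cylinder_def funpow_lshift TMC_shift)

lemma path_exists:
  "mat_pow M A k i j > 0 \<Longrightarrow> \<exists>p. p 0 = i \<and> p k = j \<and> (\<forall>t<k. A (p t) (p (Suc t)) > 0) \<and> (\<forall>t. 0 < t \<and> t < k \<longrightarrow> p t \<in> {1..M})"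
proof (induction k arbitrary: j)
  case 0
  then show ?case by (intro exI[of _ "\<lambda>_. i"]) (auto split: if_splits)
next
  case (Suc k)
  have "\<exists>l\<in>{1..M}. mat_pow M A k i l * A l j > 0"
  proof (rule ccontr)
    assume "\<not> ?thesis"
    then have "\<forall>l\<in>{1..M}. mat_pow M A k i l * A l j = 0" by auto
    then have "(\<Sum>l\<in>{1..M}. mat_pow M A k i l * A l j) = 0" by (rule sum.neutral)
    with Suc.prems show False by (simp only: mat_pow.simps)
  qed
  then obtain l where l: "l \<in> {1..M}" "mat_pow M A k i l > 0" "A l j > 0" by auto
  from Suc.IH[OF l(2)] obtain p where p: "p 0 = i" "p k = l" "\<forall>t<k. A (p t) (p (Suc t)) > 0"
    "\<forall>t. 0 < t \<and> t < k \<longrightarrow> p t \<in> {1..M}" by blast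
  define q where "q = p(Suc k := j)"
  show ?case
    apply (rule exI[of _ q])
    using p l by (auto simp: q_def less_Suc_eq le_Suc_eq)
qed


lemma periodic_point:
  assumes zo: "zero_one_matrix M A" and pr: "primitive_matrix M A" and b: "b \<in> {1..M}"
  shows "\<exists>\<omega>\<in>TMC M A. \<omega> 0 = b"
proof -
  from pr b obtain K where K: "K \<ge> 1" "mat_pow M A K b b > 0"
    unfolding primitive_matrix_def by blast
  from path_exists[OF K(2)] obtain p where p: "p 0 = b" "p K = b" "\<forall>t<K. A (p t) (p (Suc t)) > 0"
    "\<forall>t. 0 < t \<and> t < K \<longrightarrow> p t \<in> {1..M}" by blast
  have pin: "p t \<in> {1..M}" if "t \<le> K" for t
    using p b that by (cases "t = 0 \<or> t = K") auto
  define \<omega> where "\<omega> t = p (nat (t mod int K))" for t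
  have Kpos: "int K > 0" using K by simp
  have val: "\<omega> t \<in> {1..M}" for t
  proof -
    have "nat (t mod int K) \<le> K" using Kpos by (simp add: nat_le_iff order.strict_implies_order)
    then show ?thesis unfolding \<omega>_def using pin by blast
  qed
  have step: "A (\<omega> t) (\<omega> (t+1)) = 1" for t
  proof -
    define r where "r = nat (t mod int K)"
    have rK: "r < K" unfolding r_def using Kpos by (simp add: nat_less_iff)
    have "\<omega> (t+1) = p (Suc r)"
    proof (cases "Suc r = K")
      case True
      have "int r = t mod int K" unfolding r_def using pos_mod_sign[OF Kpos] by simp
      with True have "t mod int K + 1 = int K" by linarith
      then have "(t + 1) mod int K = 0" by (metis mod_add_left_eq mod_self)
      then show ?thesis using True p by (simp add: \<omega>_def)
    next
      case False
      then have "t mod int K + 1 < int K" unfolding r_def using rK Kpos r_def by linarith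
      then have "(t + 1) mod int K = t mod int K + 1"
        by (metis Kpos mod_add_left_eq mod_pos_pos_trivial pos_mod_sign zero_less_one add_nonneg_pos order.strict_implies_order)
      then show ?thesis unfolding \<omega>_def r_def using Kpos by (simp add: nat_add_distrib)
    qed
    then have "A (\<omega> t) (\<omega> (t+1)) > 0" using p(3) rK by (simp add: \<omega>_def r_def)
    moreover have "A (\<omega> t) (\<omega> (t+1)) = 0 \<or> A (\<omega> t) (\<omega> (t+1)) = 1"
      using zo val unfolding zero_one_matrix_def by blast
    ultimately show ?thesis by simp
  qed
  have "\<omega> \<in> TMC M A" unfolding TMC_def using val step by blast
  moreover have "\<omega> 0 = b" using p by (simp add: \<omega>_def)
  ultimately show ?thesis by blast
qed

lemma gibbs_pos:
  assumes "gibbs_measure M A \<phi> \<mu>" "\<omega> \<in> TMC M A"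
  shows "measure \<mu> (cylinder (TMC M A) 0 0 \<omega>) > 0"
proof -
  from assms(1) obtain P c1 c2 where c: "0 < c1" and
    g: "\<forall>\<omega>\<in>TMC M A. \<forall>n::nat. n \<ge> 1 \<longrightarrow>
           c1 * exp (- real n * P + (\<Sum>k<n. \<phi> ((lshift ^^ k) \<omega>)))
             \<le> measure \<mu> (cylinder (TMC M A) 0 (int n - 1) \<omega>)"
    unfolding gibbs_measure_def by blast
  from g assms(2) have "c1 * exp (- real (1::nat) * P + (\<Sum>k<(1::nat). \<phi> ((lshift ^^ k) \<omega>)))
             \<le> measure \<mu> (cylinder (TMC M A) 0 (int 1 - 1) \<omega>)" by blast
  moreover have "c1 * exp (- real (1::nat) * P + (\<Sum>k<(1::nat). \<phi> ((lshift ^^ k) \<omega>))) > 0"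
    using c by simp
  ultimately show ?thesis by simp
qed

primrec kseq :: "(nat \<Rightarrow> nat) \<Rightarrow> nat \<Rightarrow> nat" where
  "kseq D 0 = D 0"
| "kseq D (Suc n) = (if Suc n \<le> kseq D n then kseq D n else Suc n + D (Suc n))"

lemma kseq_bounds: "mono D \<Longrightarrow> n \<le> kseq D n \<and> kseq D n \<le> n + D n"
proof (induction n)
  case 0 then show ?case by simp
next
  case (Suc n)
  have "D n \<le> D (Suc n)" using Suc.prems by (simp add: monoD)
  then show ?case using Suc by auto
qed

lemma kseq_reset: "\<exists>n1>n. kseq D n1 = n1 + D n1"
proof (induction "kseq D n - n" arbitrary: n rule: less_induct)
  case less
  show ?case
  proof (cases "Suc n \<le> kseq D n")
    case False
    then show ?thesis by (intro exI[of _ "Suc n"]) auto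
  next
    case True
    then have "kseq D (Suc n) - Suc n < kseq D n - n" by simp
    from less[OF this] obtain n1 where "n1 > Suc n" "kseq D n1 = n1 + D n1" by blast
    then show ?thesis by (intro exI[of _ n1]) auto
  qed
qed

lemma kseq_const: assumes "kseq D n1 = n1 + D n1" "n1 \<le> m" "m \<le> n1 + D n1" shows "kseq D m = kseq D n1"
  using assms(2,3)
proof (induction m rule: dec_induct)
  case base then show ?case by simp
next
  case (step m)
  then show ?case using assms(1) by simp
qed

theorem theorem2p2:
  fixes M :: nat and A :: "nat \<Rightarrow> nat \<Rightarrow> nat" and \<phi> :: "seq \<Rightarrow> real"
    and \<mu> :: "seq measure" and l :: "nat \<Rightarrow> nat"
  assumes "M \<ge> 2"
    and "zero_one_matrix M A" and "primitive_matrix M A"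
    and "hoelder_on (TMC M A) \<phi>"
    and "gibbs_measure M A \<phi> \<mu>"
    and "filterlim l at_top sequentially"
  shows "(\<exists>lo hi w. (\<forall>n\<ge>1. lo n \<le> hi n) \<and> centered_seq l lo hi \<and>
            (\<Sum>n. emeasure \<mu> (cylinder (TMC M A) (lo (Suc n)) (hi (Suc n)) (w (Suc n)))) = \<infinity> \<and>
            \<not> SP \<mu> (\<lambda>n. cylinder (TMC M A) (lo n) (hi n) (w n)))
       \<and> (\<exists>lo hi w. (\<forall>n\<ge>1. lo n \<le> hi n) \<and> aligned_seq l lo \<and>
            (\<Sum>n. emeasure \<mu> (cylinder (TMC M A) (lo (Suc n)) (hi (Suc n)) (w (Suc n)))) = \<infinity> \<and>
            \<not> SP \<mu> (\<lambda>n. cylinder (TMC M A) (lo n) (hi n) (w n)))"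
  proof -
  note g = assms(5)[unfolded gibbs_measure_def]
  have ps: "prob_space \<mu>" and sets\<mu>: "sets \<mu> = sets (full_shift_space M)"
    and msh: "lshift \<in> measurable \<mu> \<mu>" and inv: "distr \<mu> \<mu> lshift = \<mu>" using g by auto
  interpret prob_space \<mu> by (rule ps)
  have sp: "space \<mu> = space (full_shift_space M)" using sets\<mu> by (rule sets_eq_imp_space_eq)
  define E where "E k = cylinder (TMC M A) k k (\<lambda>_. 1::nat)" for k
  have Esets: "E k \<in> sets \<mu>" for k unfolding E_def sets\<mu> by (rule cyl_sets)
  have Esub: "E k \<subseteq> space \<mu>" for k unfolding E_def sp cylinder_def using TMC_space by blast
  have Epre: "(lshift ^^ n) -` E k = E (k + int n)" for n k unfolding E_def pre_cyl by simp
  have Eshift: "measure \<mu> (E (k+1)) = measure \<mu> (E k)" for k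
  proof -
    have "measure \<mu> (E k) = measure (distr \<mu> \<mu> lshift) (E k)" using inv by simp
    also have "\<dots> = measure \<mu> (lshift -` E k \<inter> space \<mu>)" by (rule measure_distr[OF msh Esets])
    also have "lshift -` E k = E (k+1)" using Epre[of 1 k] by simp
    finally show ?thesis using Esub[of "k+1"] by (simp add: Int_absorb2)
  qed
  define p where "p = measure \<mu> (E 0)"
  have Ep: "measure \<mu> (E k) = p" for k
  proof (induction k rule: int_induct[of _ 0])
    case base then show ?case by (simp add: p_def)
  next
    case (step1 i) then show ?case using Eshift[of i] by simp
  next
    case (step2 i) then show ?case using Eshift[of "i - 1"] by simp
  qed
  have one: "(1::nat) \<in> {1..M}" and two: "(2::nat) \<in> {1..M}" using assms(1) by auto
  obtain \<omega>1 where w1: "\<omega>1 \<in> TMC M A" "\<omega>1 0 = 1" using periodic_point[OF assms(2,3) one] by blast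
  obtain \<omega>2 where w2: "\<omega>2 \<in> TMC M A" "\<omega>2 0 = 2" using periodic_point[OF assms(2,3) two] by blast
  have "cylinder (TMC M A) 0 0 \<omega>1 = E 0" unfolding E_def cylinder_def using w1 by auto
  then have ppos: "p > 0" using gibbs_pos[OF assms(5) w1(1)] by (simp add: p_def)
  define F where "F = cylinder (TMC M A) 0 0 \<omega>2"
  have qpos: "measure \<mu> F > 0" unfolding F_def using gibbs_pos[OF assms(5) w2(1)] .
  have Fsets: "F \<in> sets \<mu>" unfolding F_def sets\<mu> by (rule cyl_sets)
  have disj: "E 0 \<inter> F = {}" unfolding E_def F_def cylinder_def using w2 by auto
  have "measure \<mu> (E 0 \<union> F) = p + measure \<mu> F"
    using finite_measure_Union[OF Esets Fsets disj] by (simp add: p_def)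
  moreover have "measure \<mu> (E 0 \<union> F) \<le> 1" by (rule prob_le_1)
  ultimately have pless: "p < 1" using qpos by simp
  define L where "L n = Inf (l ` {n..})" for n
  define D where "D n = L n div 2" for n
  have Ll: "L n \<le> l n" for n unfolding L_def by (rule cInf_lower) auto
  have monoD: "mono D"
  proof (rule monoI)
    fix a b :: nat assume "a \<le> b"
    then have "L a \<le> L b" unfolding L_def by (intro cInf_superset_mono) auto
    then show "D a \<le> D b" unfolding D_def by (simp add: div_le_mono)
  qed
  have Dbig: "\<exists>N. \<forall>n\<ge>N. D n \<ge> W" for W
  proof -
    have "eventually (\<lambda>n. l n \<ge> 2 * W) sequentially"
      using assms(6) by (simp add: filterlim_at_top)
    then obtain N where N: "\<forall>n\<ge>N. l n \<ge> 2 * W" by (auto simp: eventually_sequentially)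
    have "L n \<ge> 2 * W" if "n \<ge> N" for n
      unfolding L_def using N that by (intro cInf_greatest) auto
    then have "D n \<ge> W" if "n \<ge> N" for n
    proof -
      have "L n \<ge> 2 * W" using \<open>\<And>n. n \<ge> N \<Longrightarrow> L n \<ge> 2 * W\<close> that .
      then show ?thesis unfolding D_def by presburger
    qed
    then show ?thesis by blast
  qed
  define j where "j n = int (kseq D n) - int n" for n
  define C where "C n = cylinder (TMC M A) (j n) (j n) (\<lambda>_. 1::nat)" for n
  have CE: "C n = E (j n)" for n unfolding C_def E_def ..
  have jb: "0 \<le> j n \<and> 2 * j n \<le> int (l n)" for n
  proof -
    have "n \<le> kseq D n" "kseq D n \<le> n + D n" using kseq_bounds[OF monoD] by auto
    moreover have "2 * D n \<le> l n" using Ll[of n] unfolding D_def by linarith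
    ultimately show ?thesis unfolding j_def by simp
  qed
  have cent: "centered_seq l j j" unfolding centered_seq_def
  proof (intro allI impI)
    fix n :: nat
    have a: "0 \<le> j n" "2 * j n \<le> int (l n)" using jb by auto
    then have "real_of_int (2 * j n) \<le> real_of_int (int (l n))" by (simp only: of_int_le_iff)
    moreover have "0 \<le> real_of_int (j n)" using a by simp
    ultimately show "- real (l n) / 2 \<le> real_of_int (j n + j n) / 2 \<and> real_of_int (j n + j n) / 2 \<le> real (l n) / 2"
      by simp
  qed
  have alig: "aligned_seq l j" unfolding aligned_seq_def
  proof (intro allI impI)
    fix n :: nat
    have "0 \<le> j n" "2 * j n \<le> int (l n)" using jb by auto
    then show "0 \<le> j n \<and> j n \<le> int (l n)" by linarith
  qed
  have Cm: "measure \<mu> (C n) = p" for n using Ep CE by simp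
  have sumC: "(\<Sum>n. emeasure \<mu> (C (Suc n))) = \<infinity>"
  proof -
    have "(\<lambda>n. emeasure \<mu> (C (Suc n))) = (\<lambda>_. ennreal p)"
      using emeasure_eq_measure Cm by simp
    moreover have "\<not> summable (\<lambda>n::nat. p)"
    proof
      assume "summable (\<lambda>n::nat. p)"
      then have "(\<lambda>n::nat. p) \<longlonglongrightarrow> 0" by (rule summable_LIMSEQ_zero)
      then have "p = 0" by (simp add: LIMSEQ_const_iff)
      then show False using ppos by simp
    qed
    note ns = this
    have nn: "\<And>n::nat. 0 \<le> p" using ppos by simp
    have "(\<Sum>n::nat. ennreal p) = top" by (rule summable_iff_suminf_neq_top[of "\<lambda>_. p", OF nn ns])
    with \<open>(\<lambda>n. emeasure \<mu> (C (Suc n))) = (\<lambda>_. ennreal p)\<close> show ?thesis by simp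
  qed
  have preC: "(lshift ^^ m) -` C m = E (int (kseq D m))" for m
    unfolding CE Epre j_def by simp
  have notSP: "\<not> SP \<mu> C"
  proof
    assume "SP \<mu> C"
    then obtain c where c: "c > 0" and H: "\<forall>M' N. 1 \<le> M' \<and> M' \<le> N \<longrightarrow>
      (\<Sum>m=M'..N. \<Sum>n=M'..N. Rcorr \<mu> C m n) \<le> c * (\<Sum>n=M'..N. measure \<mu> (C n))"
      unfolding SP_def by blast
    obtain W :: nat where W: "c / (1 - p) < real W" using reals_Archimedean2 by blast
    have "c / (1 - p) > 0" using c pless by simp
    with W have W1: "W \<ge> 1" by simp
    obtain N0 where N0: "\<forall>n\<ge>N0. D n \<ge> W" using Dbig by blast
    obtain n1 where n1: "n1 > N0" "kseq D n1 = n1 + D n1" using kseq_reset by blast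
    have DW: "D n1 \<ge> W" using N0 n1 by simp
    define N where "N = n1 + W - 1"
    have const: "kseq D m = kseq D n1" if "m \<in> {n1..N}" for m
    proof -
      have "n1 \<le> m" "m \<le> n1 + D n1" using that DW W1 unfolding N_def by auto
      then show ?thesis by (rule kseq_const[OF n1(2)])
    qed
    have R: "Rcorr \<mu> C m n = p - p * p" if "m \<in> {n1..N}" "n \<in> {n1..N}" for m n
      unfolding Rcorr_def preC const[OF that(1)] const[OF that(2)] Cm using Ep by simp
    have card: "card {n1..N} = W" unfolding N_def using W1 by simp
    have lhs: "(\<Sum>m=n1..N. \<Sum>n=n1..N. Rcorr \<mu> C m n) = real W * (real W * (p - p * p))"
      using R card by simp
    have rhs: "(\<Sum>n=n1..N. measure \<mu> (C n)) = real W * p" using Cm card by simp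
    have "1 \<le> n1" "n1 \<le> N" using n1 W1 unfolding N_def by auto
    with H have "(\<Sum>m=n1..N. \<Sum>n=n1..N. Rcorr \<mu> C m n) \<le> c * (\<Sum>n=n1..N. measure \<mu> (C n))" by blast
    then have "real W * (real W * (p - p * p)) \<le> c * (real W * p)" unfolding lhs rhs .
    moreover have "real W * (1 - p) > c" using W pless by (simp add: pos_divide_less_eq)
    then have "(real W * p) * (real W * (1 - p)) > (real W * p) * c"
      using W1 ppos by (intro mult_strict_left_mono) auto
    ultimately show False by (simp add: algebra_simps)
  qed
  show ?thesis
  proof
    show "\<exists>lo hi w. (\<forall>n\<ge>1. lo n \<le> hi n) \<and> centered_seq l lo hi \<and>
            (\<Sum>n. emeasure \<mu> (cylinder (TMC M A) (lo (Suc n)) (hi (Suc n)) (w (Suc n)))) = \<infinity> \<and>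
            \<not> SP \<mu> (\<lambda>n. cylinder (TMC M A) (lo n) (hi n) (w n))"
      using cent sumC notSP unfolding C_def by (intro exI[of _ j] exI[of _ "\<lambda>_ _. 1"]) auto
    show "\<exists>lo hi w. (\<forall>n\<ge>1. lo n \<le> hi n) \<and> aligned_seq l lo \<and>
            (\<Sum>n. emeasure \<mu> (cylinder (TMC M A) (lo (Suc n)) (hi (Suc n)) (w (Suc n)))) = \<infinity> \<and>
            \<not> SP \<mu> (\<lambda>n. cylinder (TMC M A) (lo n) (hi n) (w n))"
      using alig sumC notSP unfolding C_def by (intro exI[of _ j] exI[of _ "\<lambda>_ _. 1"]) auto
  qed
qed

end
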